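(* Let $V$ be a real vector space of finite even dimension $n>2$ with a quadratic form $Q$ of anti-Lorentz signature $(1,n-1)$, and let $\rho$ be a $c$-compatible irreducible representation of $\mathbb{C}l(V)$ on a finite-dimensional complex vector space $K$ with nondegenerate hermitian form $(\cdot,\cdot)$, with chirality operator $\chi$. Let $u,v\in V$. Then the operator $\rho(u)+\chi\rho(v)$ is Krein-positive iff $u+v$ and $u-v$ are both timelike and future-directed.
   Context: $Cl(V,Q)$ is the real Clifford algebra with $v^2=+Q(v)$, $\mathbb{C}l(V)$ its complexification with complex conjugation $c$, $T$ the linear antiautomorphism restricting to the identity on $V$, $a^\times=c(T(a))$. $\rho$ is $c$-compatible if $(\rho(a)\psi,\phi)=(\psi,\rho(a^\times)\phi)$. A vector $v$ is timelike if $Q(v)>0$. The chirality operator is $\chi=(-i)^{n/2+q}\rho(\omega)$ with $q=n-1$ and $\omega=e_1\cdots e_n$ the volume element of a pseudo-orthonormal basis. An operator $A$ on $K$ is Krein-positive if $(\psi,A\psi)>0$ for all nonzero $\psi\in K$. The time orientation is fixed compatibly with the Krein product: a timelike vector $e$ is future-directed iff $\rho(e)$ is Krein-positive. *)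

theory Defs
  imports "HOL-Analysis.Analysis"
begin

text \<open>V = real^'n (dimension CARD('n)), K = complex^'m (dimension CARD('m)).
  The quadratic form is Q v = B v v for a symmetric bilinear form B.
  Operators on K are complex matrices complex^'m^'m.\<close>

definition quad :: "('v \<Rightarrow> 'v \<Rightarrow> real) \<Rightarrow> 'v \<Rightarrow> real" where
  "quad B v = B v v"

definition symmetric_bilinear :: "(real^'n \<Rightarrow> real^'n \<Rightarrow> real) \<Rightarrow> bool" where
  "symmetric_bilinear B \<longleftrightarrow> bilinear B \<and> (\<forall>x y. B x y = B y x)"

definition pseudo_orthonormal_basis :: "(real^'n \<Rightarrow> real^'n \<Rightarrow> real) \<Rightarrow> (nat \<Rightarrow> real^'n) \<Rightarrow> bool" where
  "pseudo_orthonormal_basis B e \<longleftrightarrow>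
     span (e ` {..<CARD('n)}) = UNIV \<and>
     (\<forall>i<CARD('n). \<forall>j<CARD('n). i \<noteq> j \<longrightarrow> B (e i) (e j) = 0) \<and>
     (\<forall>i<CARD('n). quad B (e i) = 1 \<or> quad B (e i) = -1)"

definition anti_lorentz :: "(real^'n \<Rightarrow> real^'n \<Rightarrow> real) \<Rightarrow> bool" where
  "anti_lorentz B \<longleftrightarrow> symmetric_bilinear B \<and>
     (\<exists>e. pseudo_orthonormal_basis B e \<and> quad B (e 0) = 1 \<and>
          (\<forall>i. 1 \<le> i \<and> i < CARD('n) \<longrightarrow> quad B (e i) = -1))"

text \<open>A representation of the complexified Clifford algebra Cl(V,Q) (with v^2 = +Q(v))
  on K, given (via the universal property) by a real-linear map rho : V -> End(K)
  with rho(v)^2 = Q(v) id.\<close>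
definition clifford_rep :: "(real^'n \<Rightarrow> real^'n \<Rightarrow> real) \<Rightarrow> (real^'n \<Rightarrow> complex^'m^'m) \<Rightarrow> bool" where
  "clifford_rep B \<rho> \<longleftrightarrow> linear \<rho> \<and>
     (\<forall>v. \<rho> v ** \<rho> v = mat (complex_of_real (quad B v)))"

definition csubspace_vec :: "(complex^'m) set \<Rightarrow> bool" where
  "csubspace_vec W \<longleftrightarrow> 0 \<in> W \<and> (\<forall>x\<in>W. \<forall>y\<in>W. x + y \<in> W) \<and> (\<forall>c. \<forall>x\<in>W. c *s x \<in> W)"

text \<open>Irreducible: no invariant complex subspace other than 0 and K
  (invariance under the generators rho(v) is invariance under rho(Cl(V))).\<close>
definition irreducible_rep :: "(real^'n \<Rightarrow> complex^'m^'m) \<Rightarrow> bool" where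
  "irreducible_rep \<rho> \<longleftrightarrow>
     (\<forall>W. csubspace_vec W \<and> (\<forall>v. \<forall>w\<in>W. \<rho> v *v w \<in> W) \<longrightarrow> W = {0} \<or> W = UNIV)"

definition nondeg_hermitian :: "(complex^'m \<Rightarrow> complex^'m \<Rightarrow> complex) \<Rightarrow> bool" where
  "nondeg_hermitian h \<longleftrightarrow>
     (\<forall>x y z. h x (y + z) = h x y + h x z) \<and>
     (\<forall>c x y. h x (c *s y) = c * h x y) \<and>
     (\<forall>x y. h y x = cnj (h x y)) \<and>
     (\<forall>y. (\<forall>x. h x y = 0) \<longrightarrow> y = 0)"

text \<open>c-compatibility (rho(a) psi, phi) = (psi, rho(a^x) phi); since a -> a^x is an
  antilinear antiautomorphism with v^x = v for v in V, this is equivalent to the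
  condition on generators.\<close>
definition c_compatible :: "(complex^'m \<Rightarrow> complex^'m \<Rightarrow> complex) \<Rightarrow> (real^'n \<Rightarrow> complex^'m^'m) \<Rightarrow> bool" where
  "c_compatible h \<rho> \<longleftrightarrow> (\<forall>v \<psi> \<phi>. h (\<rho> v *v \<psi>) \<phi> = h \<psi> (\<rho> v *v \<phi>))"

definition krein_positive :: "(complex^'m \<Rightarrow> complex^'m \<Rightarrow> complex) \<Rightarrow> complex^'m^'m \<Rightarrow> bool" where
  "krein_positive h A \<longleftrightarrow> (\<forall>\<psi>. \<psi> \<noteq> 0 \<longrightarrow> Im (h \<psi> (A *v \<psi>)) = 0 \<and> Re (h \<psi> (A *v \<psi>)) > 0)"

text \<open>Volume element image rho(e_1 ... e_n) and chirality operator
  chi = (-i)^(n/2+q) rho(omega), q = n - 1.\<close>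
definition volume_op :: "(real^'n \<Rightarrow> complex^'m^'m) \<Rightarrow> (nat \<Rightarrow> real^'n) \<Rightarrow> complex^'m^'m" where
  "volume_op \<rho> e = foldr (\<lambda>i M. \<rho> (e i) ** M) [0..<CARD('n)] (mat 1)"

definition chirality :: "(real^'n \<Rightarrow> complex^'m^'m) \<Rightarrow> (nat \<Rightarrow> real^'n) \<Rightarrow> complex^'m^'m" where
  "chirality \<rho> e = mat ((- \<i>) ^ (CARD('n) div 2 + (CARD('n) - 1))) ** volume_op \<rho> e"

definition timelike :: "(real^'n \<Rightarrow> real^'n \<Rightarrow> real) \<Rightarrow> real^'n \<Rightarrow> bool" where
  "timelike B v \<longleftrightarrow> quad B v > 0"

text \<open>Time orientation fixed by the Krein product.\<close>
definition future_directed :: "(real^'n \<Rightarrow> real^'n \<Rightarrow> real) \<Rightarrow> (complex^'m \<Rightarrow> complex^'m \<Rightarrow> complex)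
    \<Rightarrow> (real^'n \<Rightarrow> complex^'m^'m) \<Rightarrow> real^'n \<Rightarrow> bool" where
  "future_directed B h \<rho> v \<longleftrightarrow> timelike B v \<and> krein_positive h (\<rho> v)"

end

theory Submission
  imports Defs
begin


definition pos :: "complex \<Rightarrow> bool" where "pos z \<longleftrightarrow> Im z = 0 \<and> Re z > 0"

locale KS =
  fixes h :: "complex^'m \<Rightarrow> complex^'m \<Rightarrow> complex"
    and R :: "'v::ab_group_add \<Rightarrow> complex^'m \<Rightarrow> complex^'m"
    and X :: "complex^'m \<Rightarrow> complex^'m"
    and Q :: "'v \<Rightarrow> real"
  assumes h_add: "h x (y+z) = h x y + h x z"
   and h_smult: "h x (c *s y) = c * h x y"
   and h_sym: "h y x = cnj (h x y)"
   and R_add_v: "R (u+v) z = R u z + R v z"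
   and R_diff_v: "R (u - v) z = R u z - R v z"
   and R_add: "R w (x+y) = R w x + R w y"
   and R_smult: "R w (c *s x) = c *s R w x"
   and R_sq: "R w (R w z) = of_real (Q w) *s z"
   and R_adj: "h (R w x) y = h x (R w y)"
   and X_add: "X (x+y) = X x + X y"
   and X_smult: "X (c *s x) = c *s X x"
   and X_sq: "X (X z) = z"
   and X_adj: "h (X x) y = - h x (X y)"
   and X_anti: "X (R w z) = - R w (X z)"
   and spacelike: "\<And>w. \<exists>a. Q a < 0 \<and> (\<forall>z. R a (R w z) = - R w (R a z))"
   and nonzero: "\<exists>z::complex^'m. z \<noteq> 0"
begin

lemma neg_eq: "- (x::complex^'m) = (-1) *s x" by (rule vector_sneg_minus1)

lemma h_zero[simp]: "h x 0 = 0"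
  using h_smult[of x 0 0] by simp
lemma h_neg: "h x (- y) = - h x y"
  unfolding neg_eq[of y] h_smult by simp
lemma h_diff: "h x (y - z) = h x y - h x z"
  using h_add[of x y "-z"] h_neg by simp
lemma h_ladd: "h (x+y) z = h x z + h y z"
  by (metis h_add h_sym complex_cnj_add)
lemma h_lsmult: "h (c *s x) z = cnj c * h x z"
  by (metis h_smult h_sym complex_cnj_mult complex_cnj_cnj)
lemma h_lzero[simp]: "h 0 x = 0"
  using h_lsmult[of 0 0 x] by simp
lemma h_lneg: "h (- x) y = - h x y"
  unfolding neg_eq[of x] h_lsmult by simp
lemma R_zero[simp]: "R w 0 = 0"
  using R_smult[of w 0 0] by simp
lemma R_neg: "R w (- x) = - R w x"
  unfolding neg_eq[of x] neg_eq[of "R w x"] by (rule R_smult)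
lemma R_diff: "R w (x - y) = R w x - R w y"
  using R_add[of w x "-y"] R_neg by simp
lemma X_neg: "X (- x) = - X x"
  unfolding neg_eq[of x] neg_eq[of "X x"] by (rule X_smult)
lemma X_zero[simp]: "X 0 = 0"
  using X_smult[of 0 0] by simp
lemma X_diff: "X (x - y) = X x - X y"
  using X_add[of x "-y"] X_neg by simp

definition kp :: "('v) \<Rightarrow> bool" where
  "kp w \<longleftrightarrow> (\<forall>\<psi>. \<psi> \<noteq> 0 \<longrightarrow> pos (h \<psi> (R w \<psi>)))"
definition PP where "PP w \<longleftrightarrow> (\<forall>p. p \<noteq> 0 \<and> X p = p \<longrightarrow> pos (h p (R w p)))"
definition PM where "PM w \<longleftrightarrow> (\<forall>p. p \<noteq> 0 \<and> X p = - p \<longrightarrow> pos (h p (R w p)))"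

lemma decomp: "\<exists>p m. \<psi> = p + m \<and> X p = p \<and> X m = - m"
proof -
  define p where "p = (1/2::complex) *s (\<psi> + X \<psi>)"
  define m where "m = (1/2::complex) *s (\<psi> - X \<psi>)"
  have "\<psi> = p + m" unfolding p_def m_def by (simp add: vec_eq_iff field_simps)
  moreover have "X p = p" unfolding p_def by (simp add: X_smult X_add X_sq vec_eq_iff)
  moreover have "X m = - m" unfolding m_def by (simp add: X_smult X_diff X_sq vec_eq_iff)
  ultimately show ?thesis by blast
qed

lemma cross1: assumes "X x = x" "X y = - y" shows "h x (R w y) = 0"
proof -
  have "h x (R w y) = h (X x) (R w y)" using assms by simp
  also have "\<dots> = - h x (X (R w y))" by (rule X_adj)
  also have "\<dots> = - h x (R w y)" using assms by (simp add: X_anti R_neg h_neg)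
  finally show ?thesis by simp
qed

lemma cross2: assumes "X x = x" "X y = - y" shows "h y (R w x) = 0"
proof -
  have "- h y (R w x) = h (X y) (R w x)" using assms by (simp add: h_lneg)
  also have "\<dots> = - h y (X (R w x))" by (rule X_adj)
  also have "\<dots> = h y (R w x)" using assms by (simp add: X_anti h_neg)
  finally show ?thesis by simp
qed

lemma pos_add: assumes "p \<noteq> 0 \<or> m \<noteq> 0" "p \<noteq> 0 \<Longrightarrow> pos a" "m \<noteq> 0 \<Longrightarrow> pos b"
  "p = 0 \<Longrightarrow> a = 0" "m = 0 \<Longrightarrow> b = 0" shows "pos (a + b)"
  using assms unfolding pos_def by (cases "p = 0"; cases "m = 0"; auto)

lemma split_R: assumes "\<psi> = p + m" "X p = p" "X m = - m"
  shows "h \<psi> (R w \<psi>) = h p (R w p) + h m (R w m)"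
  using assms cross1[OF assms(2,3)] cross2[OF assms(2,3)]
  by (simp add: R_add h_add h_ladd)

lemma split_A: assumes "\<psi> = p + m" "X p = p" "X m = - m"
  shows "h \<psi> (R u \<psi> + X (R v \<psi>)) = h p (R (u - v) p) + h m (R (u + v) m)"
proof -
  have "R u \<psi> + X (R v \<psi>) = R (u - v) p + R (u + v) m"
    using assms by (simp add: R_add X_add X_anti R_neg R_add_v R_diff_v algebra_simps)
  then show ?thesis
    using assms cross1[OF assms(2,3)] cross2[OF assms(2,3)]
    by (simp add: h_add h_ladd)
qed

lemma kp_iff: "kp w \<longleftrightarrow> PP w \<and> PM w"
proof
  assume "kp w" then show "PP w \<and> PM w" unfolding kp_def PP_def PM_def by blast
next
  assume a: "PP w \<and> PM w"
  show "kp w" unfolding kp_def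
  proof (intro allI impI)
    fix \<psi> :: "complex^'m" assume "\<psi> \<noteq> 0"
    obtain p m where d: "\<psi> = p + m" "X p = p" "X m = - m" using decomp by blast
    show "pos (h \<psi> (R w \<psi>))" unfolding split_R[OF d]
      apply (rule pos_add[of p m])
      using d \<open>\<psi> \<noteq> 0\<close> a unfolding PP_def PM_def by auto
  qed
qed

lemma kpA_iff: "(\<forall>\<psi>. \<psi> \<noteq> 0 \<longrightarrow> pos (h \<psi> (R u \<psi> + X (R v \<psi>)))) \<longleftrightarrow> PP (u - v) \<and> PM (u + v)"
proof
  assume a: "\<forall>\<psi>. \<psi> \<noteq> 0 \<longrightarrow> pos (h \<psi> (R u \<psi> + X (R v \<psi>)))"
  show "PP (u - v) \<and> PM (u + v)" unfolding PP_def PM_def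
  proof (intro conjI allI impI)
    fix p assume p: "p \<noteq> 0 \<and> X p = p"
    have "pos (h p (R u p + X (R v p)))" using a p by blast
    moreover have "h p (R u p + X (R v p)) = h p (R (u - v) p) + h 0 (R (u+v) 0)"
      by (rule split_A) (use p in auto)
    ultimately show "pos (h p (R (u - v) p))" by simp
  next
    fix p assume p: "p \<noteq> 0 \<and> X p = - p"
    have "pos (h p (R u p + X (R v p)))" using a p by blast
    moreover have "h p (R u p + X (R v p)) = h 0 (R (u - v) 0) + h p (R (u+v) p)"
      by (rule split_A) (use p in auto)
    ultimately show "pos (h p (R (u + v) p))" by simp
  qed
next
  assume a: "PP (u - v) \<and> PM (u + v)"
  show "\<forall>\<psi>. \<psi> \<noteq> 0 \<longrightarrow> pos (h \<psi> (R u \<psi> + X (R v \<psi>)))"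
  proof (intro allI impI)
    fix \<psi> :: "complex^'m" assume "\<psi> \<noteq> 0"
    obtain p m where d: "\<psi> = p + m" "X p = p" "X m = - m" using decomp by blast
    show "pos (h \<psi> (R u \<psi> + X (R v \<psi>)))" unfolding split_A[OF d]
      apply (rule pos_add[of p m])
      using d \<open>\<psi> \<noteq> 0\<close> a unfolding PP_def PM_def by auto
  qed
qed

lemma pos_scale: assumes "c > 0" "pos (of_real c * z)" shows "pos z"
  using assms unfolding pos_def by (auto simp: zero_less_mult_iff)

lemma transfer: assumes "Q a < 0" "\<forall>z. R a (R w z) = - R w (R a z)"
  shows "h (R a m) (R w (R a m)) = of_real (- Q a) * h m (R w m)"
proof -
  have "h (R a m) (R w (R a m)) = h m (R a (R w (R a m)))" by (rule R_adj)
  also have "\<dots> = h m (- R w (R a (R a m)))" using assms by simp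
  also have "\<dots> = of_real (- Q a) * h m (R w m)" by (simp add: R_sq R_smult h_neg h_smult)
  finally show ?thesis .
qed

lemma Ra_nz: assumes "Q a < 0" "m \<noteq> 0" shows "R a m \<noteq> 0"
proof
  assume "R a m = 0"
  then have "R a (R a m) = 0" by simp
  then show False using R_sq[of a m] assms by simp
qed

lemma PP_iff_PM: "PP w \<longleftrightarrow> PM w"
proof -
  obtain a where a: "Q a < 0" "\<forall>z. R a (R w z) = - R w (R a z)" using spacelike by blast
  show ?thesis
  proof
    assume P: "PP w"
    show "PM w" unfolding PM_def
    proof (intro allI impI)
      fix m assume m: "m \<noteq> 0 \<and> X m = - m"
      have "X (R a m) = R a m" using m by (simp add: X_anti R_neg)
      then have "pos (h (R a m) (R w (R a m)))" using P Ra_nz[OF a(1)] m unfolding PP_def by blast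
      then show "pos (h m (R w m))" using transfer[OF a] pos_scale[of "- Q a"] a(1) by simp
    qed
  next
    assume P: "PM w"
    show "PP w" unfolding PP_def
    proof (intro allI impI)
      fix m assume m: "m \<noteq> 0 \<and> X m = m"
      have "X (R a m) = - R a m" using m by (simp add: X_anti)
      then have "pos (h (R a m) (R w (R a m)))" using P Ra_nz[OF a(1)] m unfolding PM_def by blast
      then show "pos (h m (R w m))" using transfer[OF a] pos_scale[of "- Q a"] a(1) by simp
    qed
  qed
qed

lemma kp_timelike: assumes "kp w" shows "Q w > 0"
proof (rule ccontr)
  assume "\<not> Q w > 0"
  then consider "Q w = 0" | "Q w < 0" by linarith
  then show False
  proof cases
    case 1
    obtain \<psi> :: "complex^'m" where "\<psi> \<noteq> 0" using nonzero by blast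
    show False
    proof (cases "R w \<psi> = 0")
      case True then show False using assms \<open>\<psi> \<noteq> 0\<close> unfolding kp_def pos_def by force
    next
      case False
      have "R w (R w \<psi>) = 0" using R_sq[of w \<psi>] 1 by simp
      then show False using assms False unfolding kp_def pos_def by force
    qed
  next
    case 2
    define c where "c = sqrt (- Q w)"
    have c: "c > 0" "c * c = - Q w" using 2 unfolding c_def by (auto simp: real_sqrt_mult_self)
    obtain \<psi> :: "complex^'m" where "\<psi> \<noteq> 0" using nonzero by blast
    define \<psi>1 where "\<psi>1 = \<psi> + of_real (1/c) *s R w \<psi>"
    define \<psi>2 where "\<psi>2 = \<psi> - of_real (1/c) *s R w \<psi>"
    have "Q w = - (c*c)" using c by simp
    then have e1: "R w \<psi>1 = (- of_real c) *s \<psi>2" and e2: "R w \<psi>2 = of_real c *s \<psi>1"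
      unfolding \<psi>1_def \<psi>2_def using c(1)
      by (simp_all add: R_add R_diff R_smult R_sq vec_eq_iff field_simps)
    have s: "\<psi>1 + \<psi>2 = 2 *s \<psi>" unfolding \<psi>1_def \<psi>2_def by (simp add: vec_eq_iff)
    have v1: "h \<psi>1 (R w \<psi>1) = - of_real c * h \<psi>1 \<psi>2" by (simp add: e1 h_smult h_neg)
    have v2: "h \<psi>2 (R w \<psi>2) = of_real c * cnj (h \<psi>1 \<psi>2)" by (simp add: e2 h_smult h_sym[of \<psi>2 \<psi>1])
    show False
    proof (cases "\<psi>1 = 0 \<or> \<psi>2 = 0")
      case True
      then show False
      proof
        assume "\<psi>1 = 0"
        then have "\<psi>2 \<noteq> 0" using s \<open>\<psi> \<noteq> 0\<close> by auto
        then show False using assms \<open>\<psi>1 = 0\<close> e2 unfolding kp_def pos_def by (force simp: h_smult)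
      next
        assume "\<psi>2 = 0"
        then have "\<psi>1 \<noteq> 0" using s \<open>\<psi> \<noteq> 0\<close> by auto
        then show False using assms \<open>\<psi>2 = 0\<close> e1 unfolding kp_def pos_def by (force simp: h_smult)
      qed
    next
      case False
      then have "pos (h \<psi>1 (R w \<psi>1))" "pos (h \<psi>2 (R w \<psi>2))" using assms unfolding kp_def by auto
      then show False unfolding v1 v2 pos_def using c(1) by (auto simp: zero_less_mult_iff mult_less_0_iff)
    qed
  qed
qed

theorem main: "(\<forall>\<psi>. \<psi> \<noteq> 0 \<longrightarrow> pos (h \<psi> (R u \<psi> + X (R v \<psi>)))) \<longleftrightarrow>
   (Q (u+v) > 0 \<and> kp (u+v)) \<and> (Q (u - v) > 0 \<and> kp (u - v))"
  using kpA_iff kp_iff PP_iff_PM kp_timelike by blast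

end


lemma mv_smult: "(A::complex^'m^'k) *v (c *s x) = c *s (A *v x)"
  by (simp add: vec_eq_iff matrix_vector_mult_def sum_distrib_left mult.left_commute)

lemma mat_mv: "mat c *v (x::complex^'m) = c *s x"
proof -
  have "(\<Sum>j\<in>UNIV. (if i = j then c else 0) * x $ j) = c * x $ i" for i
  proof -
    have "(\<Sum>j\<in>UNIV. (if i = j then c else 0) * x $ j) = (\<Sum>j\<in>UNIV. if i = j then c * x $ j else 0)"
      by (rule sum.cong) auto
    then show ?thesis by simp
  qed
  then show ?thesis by (simp add: vec_eq_iff matrix_vector_mult_def mat_def)
qed

lemma scaleR_mv: "(c *\<^sub>R (A::complex^'m^'k)) *v x = of_real c *s (A *v x)"
  by (simp add: vec_eq_iff matrix_vector_mult_def) (simp add: scaleR_conv_of_real sum_distrib_left mult.assoc)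

lemma m1sq: "(-1::complex)^L * (-1)^L = 1" by (induct L) auto

fun sg :: "nat \<Rightarrow> complex" where "sg 0 = 1" | "sg (Suc L) = (-1)^L * sg L"
lemma sg_even: "sg (2*k) = (-1)^k"
proof (induct k)
  case (Suc k)
  have "sg (2 * Suc k) = sg (Suc (Suc (2*k)))" by simp
  also have "\<dots> = - sg (2*k)" by (simp add: minus_one_power_iff)
  finally show ?case using Suc by simp
qed simp
lemma sign_facts:
  assumes "even n" "n > (2::nat)"
  defines "lam \<equiv> (- \<i>) ^ (n div 2 + (n - 1))"
  shows "cnj lam * sg n = - lam" "lam * lam * sg n * (-1) = 1"
proof -
  obtain k where k: "n = 2*k" using assms(1) by (auto elim: evenE)
  define j where "j = k - 1"
  have nj: "n = 2*(j+1)" "n div 2 + (n - 1) = 3*j+2" using k assms(2) unfolding j_def by auto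
  have sgn: "sg n = (-1)^(j+1)" unfolding nj(1) sg_even ..
  have pm: "(-\<i>)^m = (-1)^m * \<i>^m" for m :: nat
    by (metis mult_minus1 power_mult_distrib)
  have l: "lam = (-1)^(3*j+2) * \<i>^(3*j+2)" unfolding lam_def nj(2) by (rule pm)
  have par: "even (3*j+2) \<longleftrightarrow> even j" by presburger
  have c: "cnj lam = \<i>^(3*j+2)" unfolding lam_def nj(2) by simp
  show "cnj lam * sg n = - lam" unfolding c sgn l using par
    by (simp add: minus_one_power_iff)
  have ll: "lam * lam = (-1)^(3*j+2)" unfolding lam_def nj(2)
    by (simp flip: power_mult_distrib)
  show "lam * lam * sg n * (-1) = 1" unfolding ll sgn using par
    by (simp add: minus_one_power_iff)
qed

lemma po_inj:
  fixes g :: "nat \<Rightarrow> real^'n"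
  assumes "pseudo_orthonormal_basis B g"
  shows "inj_on g {..<CARD('n)}"
proof (rule inj_onI)
  fix i j assume ij: "i \<in> {..<CARD('n)}" "j \<in> {..<CARD('n)}" "g i = g j"
  show "i = j"
  proof (rule ccontr)
    assume "i \<noteq> j"
    then have "B (g i) (g j) = 0" using assms ij unfolding pseudo_orthonormal_basis_def by auto
    then have "quad B (g i) = 0" using ij(3) unfolding quad_def by simp
    then show False using assms ij unfolding pseudo_orthonormal_basis_def by auto
  qed
qed

lemma po_rep:
  fixes g :: "nat \<Rightarrow> real^'n"
  assumes "pseudo_orthonormal_basis B g"
  shows "\<exists>c. x = (\<Sum>i<CARD('n). c i *\<^sub>R g i)"
proof -
  have "x \<in> span (g ` {..<CARD('n)})" using assms unfolding pseudo_orthonormal_basis_def by simp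
  then obtain u where "x = (\<Sum>w\<in>g ` {..<CARD('n)}. u w *\<^sub>R w)"
    by (auto simp: span_finite)
  also have "\<dots> = (\<Sum>i<CARD('n). u (g i) *\<^sub>R g i)"
    by (subst sum.reindex[OF po_inj[OF assms]]) simp
  finally have xe: "x = (\<Sum>i<CARD('n). u (g i) *\<^sub>R g i)" .
  show ?thesis by (rule exI[of _ "\<lambda>i. u (g i)"]) (simp add: xe)
qed

lemma po_B:
  fixes g :: "nat \<Rightarrow> real^'n"
  assumes "symmetric_bilinear B" "pseudo_orthonormal_basis B g" "j < CARD('n)"
  shows "B (g j) (\<Sum>i<CARD('n). c i *\<^sub>R g i) = c j * quad B (g j)"
proof -
  have lin: "linear (B (g j))" using assms(1) unfolding symmetric_bilinear_def bilinear_def by simp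
  have "B (g j) (\<Sum>i<CARD('n). c i *\<^sub>R g i) = (\<Sum>i<CARD('n). c i * B (g j) (g i))"
    by (simp add: linear_sum[OF lin] linear_scale[OF lin])
  also have "\<dots> = (\<Sum>i<CARD('n). if i = j then c j * quad B (g j) else 0)"
    using assms(2,3) unfolding pseudo_orthonormal_basis_def quad_def
    by (intro sum.cong) (auto simp: assms(1)[unfolded symmetric_bilinear_def])
  also have "\<dots> = c j * quad B (g j)" using assms(3) by simp
  finally show ?thesis .
qed

lemma po_Q:
  fixes g :: "nat \<Rightarrow> real^'n"
  assumes "symmetric_bilinear B" "pseudo_orthonormal_basis B g"
  shows "quad B (\<Sum>i<CARD('n). c i *\<^sub>R g i) = (\<Sum>i<CARD('n). (c i)^2 * quad B (g i))"
proof -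
  let ?x = "\<Sum>i<CARD('n). c i *\<^sub>R g i"
  have lin: "linear (\<lambda>y. B y ?x)" using assms(1) unfolding symmetric_bilinear_def bilinear_def by simp
  have "quad B ?x = (\<Sum>i<CARD('n). c i * B (g i) ?x)"
    unfolding quad_def by (simp add: linear_sum[OF lin] linear_scale[OF lin])
  also have "\<dots> = (\<Sum>i<CARD('n). (c i)^2 * quad B (g i))"
    by (intro sum.cong refl) (simp add: po_B[OF assms] power2_eq_square)
  finally show ?thesis .
qed


lemma exactly_one:
  fixes B :: "real^'n \<Rightarrow> real^'n \<Rightarrow> real" and e :: "nat \<Rightarrow> real^'n"
  assumes "anti_lorentz B" "pseudo_orthonormal_basis B e"
  shows "\<exists>a<CARD('n). quad B (e a) = 1 \<and> (\<forall>i<CARD('n). i \<noteq> a \<longrightarrow> quad B (e i) = -1)"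
proof -
  obtain f where f: "pseudo_orthonormal_basis B f" "quad B (f 0) = 1"
      "\<forall>i. 1 \<le> i \<and> i < CARD('n) \<longrightarrow> quad B (f i) = -1" and sb: "symmetric_bilinear B"
    using assms(1) unfolding anti_lorentz_def by blast
  have bil: "bilinear B" and sym: "\<And>x y. B x y = B y x" using sb unfolding symmetric_bilinear_def by auto
  have pm: "\<forall>i<CARD('n). quad B (e i) = 1 \<or> quad B (e i) = -1"
    using assms(2) unfolding pseudo_orthonormal_basis_def by blast
  have ex: "\<exists>a<CARD('n). quad B (e a) = 1"
  proof (rule ccontr)
    assume "\<not> ?thesis"
    then have all: "\<forall>i<CARD('n). quad B (e i) = -1" using pm by auto
    obtain c where c: "f 0 = (\<Sum>i<CARD('n). c i *\<^sub>R e i)" using po_rep[OF assms(2)] by blast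
    have "quad B (f 0) = (\<Sum>i<CARD('n). (c i)^2 * quad B (e i))" unfolding c by (rule po_Q[OF sb assms(2)])
    also have "\<dots> \<le> 0" using all by (intro sum_nonpos) simp
    finally show False using f(2) by simp
  qed
  have n0: "0 < CARD('n)" by simp
  have neg: "quad B x \<le> 0" if "B (f 0) x = 0" for x
  proof -
    obtain d where d: "x = (\<Sum>i<CARD('n). d i *\<^sub>R f i)" using po_rep[OF f(1)] by blast
    have "d 0 = 0" using that po_B[OF sb f(1) n0, of d] f(2) d by simp
    have "quad B x = (\<Sum>i<CARD('n). (d i)^2 * quad B (f i))" unfolding d by (rule po_Q[OF sb f(1)])
    also have "\<dots> \<le> 0"
    proof (intro sum_nonpos)
      fix i assume "i \<in> {..<CARD('n)}"
      then show "(d i)^2 * quad B (f i) \<le> 0" using f(3) \<open>d 0 = 0\<close> by (cases "i = 0") auto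
    qed
    finally show ?thesis .
  qed
  have uniq: "a = b" if ab0: "a < CARD('n)" "b < CARD('n)" "quad B (e a) = 1" "quad B (e b) = 1" for a b
  proof (rule ccontr)
    assume ab: "a \<noteq> b"
    have eab: "B (e a) (e b) = 0" using assms(2) ab0 ab unfolding pseudo_orthonormal_basis_def by auto
    define \<alpha> where "\<alpha> = B (f 0) (e b)"
    define \<beta> where "\<beta> = - B (f 0) (e a)"
    define x where "x = \<alpha> *\<^sub>R e a + \<beta> *\<^sub>R e b"
    have "B (f 0) x = 0" unfolding x_def \<alpha>_def \<beta>_def
      by (simp add: bilinear_radd[OF bil] bilinear_rmul[OF bil] bilinear_rsub[OF bil] mult.commute)
    then have "quad B x \<le> 0" by (rule neg)
    moreover have "quad B x = \<alpha>^2 + \<beta>^2" using ab0 eab sym[of "e b" "e a"] unfolding quad_def x_def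
      by (simp add: bilinear_ladd[OF bil] bilinear_radd[OF bil] bilinear_lmul[OF bil]
          bilinear_rmul[OF bil] power2_eq_square)
    ultimately have "\<alpha>^2 + \<beta>^2 \<le> 0" by simp
    then have "\<beta> = 0" by (smt (verit) zero_le_power2 power2_less_eq_zero_iff)
    then have "B (f 0) (e a) = 0" unfolding \<beta>_def by simp
    then have "quad B (e a) \<le> 0" by (rule neg)
    then show False using ab0 by simp
  qed
  from ex obtain a where "a < CARD('n)" "quad B (e a) = 1" by blast
  then show ?thesis using uniq pm by metis
qed

lemma prod_Q:
  fixes B :: "real^'n \<Rightarrow> real^'n \<Rightarrow> real" and e :: "nat \<Rightarrow> real^'n"
  assumes "anti_lorentz B" "pseudo_orthonormal_basis B e" "even CARD('n)"
  shows "(\<Prod>i\<in>{..<CARD('n)}. quad B (e i)) = -1"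
proof -
  obtain a where a: "a < CARD('n)" "quad B (e a) = 1" "\<forall>i<CARD('n). i \<noteq> a \<longrightarrow> quad B (e i) = -1"
    using exactly_one[OF assms(1,2)] by blast
  have "(\<Prod>i\<in>{..<CARD('n)}. quad B (e i)) = quad B (e a) * (\<Prod>i\<in>{..<CARD('n)} - {a}. quad B (e i))"
    using a(1) by (simp add: prod.remove)
  also have "(\<Prod>i\<in>{..<CARD('n)} - {a}. quad B (e i)) = (\<Prod>i\<in>{..<CARD('n)} - {a}. -1)"
    using a(3) by (intro prod.cong) auto
  also have "\<dots> = (-1)^(CARD('n) - 1)" using a(1) by simp
  also have "\<dots> = -1" using assms(3) by (simp add: minus_one_power_iff)
  finally show ?thesis using a(2) by simp
qed

lemma spacelike_exists:
  fixes B :: "real^'n \<Rightarrow> real^'n \<Rightarrow> real"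
  assumes "anti_lorentz B" "CARD('n) > 2"
  shows "\<exists>a. quad B a < 0 \<and> B a w = 0"
proof -
  obtain f where f: "pseudo_orthonormal_basis B f"
      "\<forall>i. 1 \<le> i \<and> i < CARD('n) \<longrightarrow> quad B (f i) = -1" and sb: "symmetric_bilinear B"
    using assms(1) unfolding anti_lorentz_def by blast
  have bil: "bilinear B" and sym: "\<And>x y. B x y = B y x" using sb unfolding symmetric_bilinear_def by auto
  have q1: "B (f 1) (f 1) = -1" and q2: "B (f 2) (f 2) = -1" using f(2) assms(2) unfolding quad_def by auto
  have o12: "B (f 1) (f 2) = 0" using f(1) assms(2) unfolding pseudo_orthonormal_basis_def by auto
  define \<alpha> where "\<alpha> = B w (f 2)"
  define \<beta> where "\<beta> = B w (f 1)"
  show ?thesis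
  proof (cases "\<alpha> = 0 \<and> \<beta> = 0")
    case True
    then show ?thesis using q1 sym[of "f 1" w] unfolding quad_def \<beta>_def by (intro exI[of _ "f 1"]) auto
  next
    case False
    define a where "a = \<alpha> *\<^sub>R f 1 - \<beta> *\<^sub>R f 2"
    have "B a w = 0" unfolding a_def \<alpha>_def \<beta>_def using sym[of "f 1" w] sym[of "f 2" w]
      by (simp add: bilinear_lsub[OF bil] bilinear_lmul[OF bil])
    moreover have "quad B a = - (\<alpha>^2 + \<beta>^2)" unfolding quad_def a_def using q1 q2 o12 sym[of "f 2" "f 1"]
      by (simp add: bilinear_lsub[OF bil] bilinear_rsub[OF bil] bilinear_lmul[OF bil]
          bilinear_rmul[OF bil] power2_eq_square)
    moreover have "\<alpha>^2 + \<beta>^2 > 0" using False by (simp add: sum_power2_gt_zero_iff)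
    ultimately show ?thesis by (intro exI[of _ a]) auto
  qed
qed


locale CR =
  fixes B :: "real^'n \<Rightarrow> real^'n \<Rightarrow> real" and \<rho> :: "real^'n \<Rightarrow> complex^'m^'m"
    and e :: "nat \<Rightarrow> real^'n"
  assumes sb: "symmetric_bilinear B" and cr: "clifford_rep B \<rho>" and po: "pseudo_orthonormal_basis B e"
begin

lemma lin: "linear \<rho>" using cr unfolding clifford_rep_def by simp
lemma bil: "bilinear B" using sb unfolding symmetric_bilinear_def by simp
lemma sym: "B x y = B y x" using sb unfolding symmetric_bilinear_def by simp

lemma R_sq: "\<rho> w *v (\<rho> w *v z) = of_real (quad B w) *s z"
  using cr unfolding clifford_rep_def by (simp add: matrix_vector_mul_assoc mat_mv)

lemma rho_add: "\<rho> (x + y) = \<rho> x + \<rho> y" by (rule linear_add[OF lin])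
lemma rho_diff: "\<rho> (x - y) = \<rho> x - \<rho> y" by (rule linear_diff[OF lin])
lemma rho_scale: "\<rho> (c *\<^sub>R x) = c *\<^sub>R \<rho> x" by (rule linear_scale[OF lin])
lemma rho_zero: "\<rho> 0 = 0" by (rule linear_0[OF lin])

lemma anti: "\<rho> x *v (\<rho> y *v z) + \<rho> y *v (\<rho> x *v z) = of_real (2 * B x y) *s z"
proof -
  have "\<rho> (x+y) *v (\<rho> (x+y) *v z) = of_real (quad B (x+y)) *s z" by (rule R_sq)
  moreover have "quad B (x+y) = quad B x + 2 * B x y + quad B y" unfolding quad_def
    by (simp add: bilinear_ladd[OF bil] bilinear_radd[OF bil] sym[of y x])
  ultimately have h: "\<rho> x *v (\<rho> x *v z) + \<rho> x *v (\<rho> y *v z) + (\<rho> y *v (\<rho> x *v z) + \<rho> y *v (\<rho> y *v z))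
      = of_real (quad B x + 2 * B x y + quad B y) *s z"
    by (simp add: rho_add matrix_vector_mult_add_rdistrib matrix_vector_right_distrib add_ac)
  have "\<rho> x *v (\<rho> y *v z) + \<rho> y *v (\<rho> x *v z) =
     (\<rho> x *v (\<rho> x *v z) + \<rho> x *v (\<rho> y *v z) + (\<rho> y *v (\<rho> x *v z) + \<rho> y *v (\<rho> y *v z)))
      - \<rho> x *v (\<rho> x *v z) - \<rho> y *v (\<rho> y *v z)" by (simp add: algebra_simps)
  also have "\<dots> = of_real (quad B x + 2 * B x y + quad B y) *s z - of_real (quad B x) *s z - of_real (quad B y) *s z"
    unfolding h by (simp only: R_sq)
  also have "\<dots> = of_real (2 * B x y) *s z" by (simp add: vec_eq_iff algebra_simps)
  finally show ?thesis .
qed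

lemma anti_orth: "B x y = 0 \<Longrightarrow> \<rho> x *v (\<rho> y *v z) = - (\<rho> y *v (\<rho> x *v z))"
  using anti[of x y z] by (simp add: eq_neg_iff_add_eq_0)

lemma anti_e: "i < CARD('n) \<Longrightarrow> j < CARD('n) \<Longrightarrow> i \<noteq> j \<Longrightarrow>
   \<rho> (e i) *v (\<rho> (e j) *v z) = - (\<rho> (e j) *v (\<rho> (e i) *v z))"
  by (rule anti_orth) (use po in \<open>auto simp: pseudo_orthonormal_basis_def\<close>)

definition PV :: "nat list \<Rightarrow> complex^'m \<Rightarrow> complex^'m" where
  "PV xs z = foldr (\<lambda>i w. \<rho> (e i) *v w) xs z"

lemma PV_Nil[simp]: "PV [] z = z" by (simp add: PV_def)
lemma PV_Cons[simp]: "PV (a#xs) z = \<rho> (e a) *v PV xs z" by (simp add: PV_def)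
lemma PV_smult: "PV xs (c *s z) = c *s PV xs z" by (induct xs) (simp_all add: mv_smult)
lemma PV_add: "PV xs (x + y) = PV xs x + PV xs y" by (induct xs) (simp_all add: matrix_vector_right_distrib)
lemma PV_zero: "PV xs 0 = 0" by (induct xs) simp_all
lemma PV_append: "PV (xs @ ys) z = PV xs (PV ys z)" by (simp add: PV_def)

lemma vol: "volume_op \<rho> e *v z = PV [0..<CARD('n)] z"
proof -
  have "foldr (\<lambda>i M. \<rho> (e i) ** M) xs N *v z = PV xs (N *v z)" for xs N
    by (induct xs) (simp_all add: matrix_vector_mul_assoc[symmetric])
  then show ?thesis by (simp add: volume_op_def)
qed

lemma L1: "set xs \<subseteq> {..<CARD('n)} \<Longrightarrow> j < CARD('n) \<Longrightarrow> j \<notin> set xs \<Longrightarrow>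
   \<rho> (e j) *v PV xs z = (-1)^length xs *s PV xs (\<rho> (e j) *v z)"
proof (induct xs)
  case Nil show ?case by simp
next
  case (Cons a xs)
  have "\<rho> (e j) *v PV (a#xs) z = - (\<rho> (e a) *v (\<rho> (e j) *v PV xs z))"
    using Cons.prems by (simp add: anti_e[of j a])
  also have "\<dots> = - (\<rho> (e a) *v ((-1)^length xs *s PV xs (\<rho> (e j) *v z)))" using Cons by simp
  also have "\<dots> = (-1)^length (a#xs) *s PV (a#xs) (\<rho> (e j) *v z)" by (simp add: mv_smult)
  finally show ?case .
qed

lemma L1': "set xs \<subseteq> {..<CARD('n)} \<Longrightarrow> j < CARD('n) \<Longrightarrow> j \<notin> set xs \<Longrightarrow>
   PV xs (\<rho> (e j) *v z) = (-1)^length xs *s (\<rho> (e j) *v PV xs z)"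
  by (simp add: L1 vector_smult_assoc m1sq)

lemma L2: "distinct xs \<Longrightarrow> set xs \<subseteq> {..<CARD('n)} \<Longrightarrow> j \<in> set xs \<Longrightarrow>
   \<rho> (e j) *v PV xs z = (-1)^(length xs - 1) *s PV xs (\<rho> (e j) *v z)"
proof (induct xs)
  case Nil then show ?case by simp
next
  case (Cons a xs)
  show ?case
  proof (cases "a = j")
    case True
    then have nj: "j \<notin> set xs" using Cons.prems by auto
    have "(-1)^(length (a#xs) - 1) *s PV (a#xs) (\<rho> (e j) *v z) =
        (-1)^length xs *s (\<rho> (e j) *v ((-1)^length xs *s (\<rho> (e j) *v PV xs z)))"
      using True Cons.prems nj by (simp add: L1')
    also have "\<dots> = \<rho> (e j) *v (\<rho> (e j) *v PV xs z)" by (simp add: mv_smult vector_smult_assoc m1sq)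
    finally show ?thesis using True by simp
  next
    case False
    then have jx: "j \<in> set xs" using Cons.prems by auto
    then obtain k where k: "length xs = Suc k" by (cases xs) auto
    have "\<rho> (e j) *v PV (a#xs) z = - (\<rho> (e a) *v (\<rho> (e j) *v PV xs z))"
      unfolding PV_Cons using Cons.prems False jx by (intro anti_e[of j a]) auto
    also have "\<dots> = - (\<rho> (e a) *v ((-1)^k *s PV xs (\<rho> (e j) *v z)))" using Cons.hyps Cons.prems jx k by simp
    also have "\<dots> = (-1)^(length (a#xs) - 1) *s PV (a#xs) (\<rho> (e j) *v z)" using k by (simp add: mv_smult)
    finally show ?thesis .
  qed
qed

lemma Omega_anti_e: assumes "even CARD('n)" "j < CARD('n)"
  shows "\<rho> (e j) *v PV [0..<CARD('n)] z = - PV [0..<CARD('n)] (\<rho> (e j) *v z)"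
proof -
  have "odd (CARD('n) - 1)" using assms(1) by simp
  then have "(-1::complex)^(CARD('n) - 1) = -1" by (simp add: minus_one_power_iff)
  then show ?thesis using L2[of "[0..<CARD('n)]" j z] assms by (simp add: vector_smult_lneg atLeast0LessThan)
qed

lemma Omega_anti: assumes "even CARD('n)"
  shows "\<rho> v *v PV [0..<CARD('n)] z = - PV [0..<CARD('n)] (\<rho> v *v z)"
proof -
  have "v \<in> span (e ` {..<CARD('n)})" using po by (simp add: pseudo_orthonormal_basis_def)
  then have "\<forall>z. \<rho> v *v PV [0..<CARD('n)] z = - PV [0..<CARD('n)] (\<rho> v *v z)"
  proof (induct rule: span_induct_alt)
    case base show ?case by (simp add: rho_zero PV_zero)
  next
    case (step c x y)
    from step(1) obtain j where j: "j < CARD('n)" "x = e j" by auto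
    show ?case using step(2) Omega_anti_e[OF assms j(1)] j(2)
      by (simp add: rho_add rho_scale matrix_vector_mult_add_rdistrib scaleR_mv PV_add PV_smult)
  qed
  then show ?thesis by blast
qed

lemma PV_sq: "distinct xs \<Longrightarrow> set xs \<subseteq> {..<CARD('n)} \<Longrightarrow>
  PV xs (PV xs z) = (sg (length xs) * of_real (\<Prod>i\<in>set xs. quad B (e i))) *s z"
proof (induct xs)
  case Nil then show ?case by simp
next
  case (Cons a xs)
  have "PV (a#xs) (PV (a#xs) z) = \<rho> (e a) *v ((-1)^length xs *s (\<rho> (e a) *v (PV xs (PV xs z))))"
    using L1'[of xs a "PV xs z"] Cons.prems by simp
  also have "\<dots> = ((-1)^length xs * of_real (quad B (e a)) * (sg (length xs) * of_real (\<Prod>i\<in>set xs. quad B (e i)))) *s z"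
    using Cons by (simp add: mv_smult R_sq vector_smult_assoc)
  also have "\<dots> = (sg (length (a#xs)) * of_real (\<Prod>i\<in>set (a#xs). quad B (e i))) *s z"
    using Cons.prems by (simp add: algebra_simps)
  finally show ?case .
qed

lemma PV_rev: "distinct xs \<Longrightarrow> set xs \<subseteq> {..<CARD('n)} \<Longrightarrow> PV (rev xs) y = sg (length xs) *s PV xs y"
proof (induct xs arbitrary: y)
  case Nil then show ?case by simp
next
  case (Cons a xs)
  have "PV (rev (a#xs)) y = sg (length xs) *s PV xs (\<rho> (e a) *v y)"
    using Cons by (simp add: PV_append)
  also have "\<dots> = sg (length (a#xs)) *s PV (a#xs) y"
    using Cons.prems by (simp add: L1' vector_smult_assoc mult.commute)
  finally show ?case .
qed

lemma PV_adj: assumes "c_compatible h \<rho>" shows "h (PV xs x) y = h x (PV (rev xs) y)"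
proof (induct xs arbitrary: y)
  case Nil then show ?case by simp
next
  case (Cons a xs)
  have "h (PV (a#xs) x) y = h (PV xs x) (\<rho> (e a) *v y)"
    using assms unfolding c_compatible_def by simp
  also have "\<dots> = h x (PV (rev (a#xs)) y)" using Cons by (simp add: PV_append)
  finally show ?case .
qed

end


theorem lemma8:
  fixes B :: "real^'n \<Rightarrow> real^'n \<Rightarrow> real"
    and \<rho> :: "real^'n \<Rightarrow> complex^'m^'m"
    and h :: "complex^'m \<Rightarrow> complex^'m \<Rightarrow> complex"
    and e :: "nat \<Rightarrow> real^'n"
    and u v :: "real^'n"
  assumes "even CARD('n)" and "CARD('n) > 2"
    and "anti_lorentz B"
    and "clifford_rep B \<rho>"
    and "nondeg_hermitian h"
    and "c_compatible h \<rho>"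
    and "irreducible_rep \<rho>"
    and "pseudo_orthonormal_basis B e"
  shows "krein_positive h (\<rho> u + chirality \<rho> e ** \<rho> v) \<longleftrightarrow>
         future_directed B h \<rho> (u + v) \<and> future_directed B h \<rho> (u - v)"
proof -
  have sb: "symmetric_bilinear B" using assms(3) unfolding anti_lorentz_def by blast
  interpret C: CR B \<rho> e using sb assms(4,8) by unfold_locales
  define lam where "lam = (- \<i>) ^ (CARD('n) div 2 + (CARD('n) - 1))"
  have sf: "cnj lam * sg CARD('n) = - lam" "lam * lam * sg CARD('n) * (-1) = 1"
    using sign_facts[OF assms(1,2)] unfolding lam_def by auto
  have chi: "chirality \<rho> e *v z = lam *s C.PV [0..<CARD('n)] z" for z
    unfolding chirality_def lam_def[symmetric]
    by (simp only: matrix_vector_mul_assoc[symmetric] mat_mv C.vol)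
  have hadd: "h x (y + z) = h x y + h x z" and hsm: "h x (c *s y) = c * h x y"
    and hsym: "h y x = cnj (h x y)" for x y z c
    using assms(5) unfolding nondeg_hermitian_def by blast+
  have hlsm: "h (c *s x) y = cnj c * h x y" for c x y
    by (metis hsm hsym complex_cnj_mult complex_cnj_cnj)
  have cc: "h (\<rho> w *v x) y = h x (\<rho> w *v y)" for w x y
    using assms(6) unfolding c_compatible_def by simp
  have prodQ: "(\<Prod>i\<in>set [0..<CARD('n)]. quad B (e i)) = -1"
    using prod_Q[OF assms(3,8,1)] by (simp add: atLeast0LessThan)
  have pre: "distinct [0..<CARD('n)]" "set [0..<CARD('n)] \<subseteq> {..<CARD('n)}" by auto
  have sq: "C.PV [0..<CARD('n)] (C.PV [0..<CARD('n)] z) = (sg CARD('n) * of_real (-1)) *s z" for z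
    using C.PV_sq[OF pre, of z, unfolded prodQ] by simp
  have rv: "C.PV (rev [0..<CARD('n)]) y = sg CARD('n) *s C.PV [0..<CARD('n)] y" for y
    using C.PV_rev[OF pre, of y] by simp
  have Xsq: "chirality \<rho> e *v (chirality \<rho> e *v z) = z" for z
  proof -
    have "chirality \<rho> e *v (chirality \<rho> e *v z) = (lam * lam * sg CARD('n) * (-1)) *s z"
      unfolding chi C.PV_smult sq vector_smult_assoc by (simp add: mult.assoc)
    also have "\<dots> = z" unfolding sf(2) by simp
    finally show ?thesis .
  qed
  have Xadj: "h (chirality \<rho> e *v x) y = - h x (chirality \<rho> e *v y)" for x y
  proof -
    have "h (chirality \<rho> e *v x) y = cnj lam * h x (C.PV (rev [0..<CARD('n)]) y)"
      unfolding chi hlsm C.PV_adj[OF assms(6)] ..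
    also have "\<dots> = (cnj lam * sg CARD('n)) * h x (C.PV [0..<CARD('n)] y)"
      unfolding rv hsm by (simp add: mult.assoc)
    also have "\<dots> = - h x (chirality \<rho> e *v y)" unfolding sf(1) chi hsm by simp
    finally show ?thesis .
  qed
  have Xanti: "chirality \<rho> e *v (\<rho> w *v z) = - (\<rho> w *v (chirality \<rho> e *v z))" for w z
    unfolding chi using C.Omega_anti[OF assms(1), of w z] by (simp add: mv_smult vector_smult_rneg)
  have spc: "\<exists>a. quad B a < 0 \<and> (\<forall>z. \<rho> a *v (\<rho> w *v z) = - (\<rho> w *v (\<rho> a *v z)))" for w
  proof -
    obtain a where "quad B a < 0" "B a w = 0" using spacelike_exists[OF assms(3,2)] by blast
    then show ?thesis using C.anti_orth by blast
  qed
  have nz: "\<exists>z::complex^'m. z \<noteq> 0" by (intro exI[of _ "vec 1"]) (simp add: vec_eq_iff)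
  interpret K: KS h "\<lambda>v z. \<rho> v *v z" "\<lambda>z. chirality \<rho> e *v z" "quad B"
    apply unfold_locales
    subgoal by (rule hadd)
    subgoal by (rule hsm)
    subgoal by (rule hsym)
    subgoal by (simp add: C.rho_add matrix_vector_mult_add_rdistrib)
    subgoal by (simp add: C.rho_diff matrix_vector_mult_diff_rdistrib)
    subgoal by (simp add: matrix_vector_right_distrib)
    subgoal by (simp add: mv_smult)
    subgoal by (rule C.R_sq)
    subgoal by (rule cc)
    subgoal by (simp add: matrix_vector_right_distrib)
    subgoal by (simp add: mv_smult)
    subgoal by (rule Xsq)
    subgoal by (rule Xadj)
    subgoal by (rule Xanti)
    subgoal by (rule spc)
    subgoal by (rule nz)
    done
  have lhs: "krein_positive h (\<rho> u + chirality \<rho> e ** \<rho> v) \<longleftrightarrow>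
     (\<forall>\<psi>. \<psi> \<noteq> 0 \<longrightarrow> pos (h \<psi> (\<rho> u *v \<psi> + chirality \<rho> e *v (\<rho> v *v \<psi>))))"
    unfolding krein_positive_def pos_def
    by (simp add: matrix_vector_mult_add_rdistrib matrix_vector_mul_assoc)
  have fd: "future_directed B h \<rho> w \<longleftrightarrow> quad B w > 0 \<and> K.kp w" for w
    unfolding future_directed_def timelike_def krein_positive_def K.kp_def pos_def by simp
  show ?thesis unfolding lhs fd using K.main[of u v] by simp
qed


end
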